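(* In the setting of the context, with $\alpha_k=\frac a{(b+k)^\gamma}$, $\gamma\in(\frac12,1)$, $a>0$, $b>1$, $\frac a{b^\gamma}\le\frac1{2M\tilde L}$, for every $n\ge0$ and $0\le k\le n$, $$B_k\le\frac{a^2M\tilde Lc(A)\sigma_{\max}^2}{2\gamma-1}(b+k-1)^{1-2\gamma}\exp\Big(\frac{a\sigma_{\min}^2}{1-\gamma}(b+k+1)^{1-\gamma}\Big)\exp\Big(-\frac{a\sigma_{\min}^2}{1-\gamma}(b+n+1)^{1-\gamma}\Big).$$
   Context: Standing setting: $M\ge N$, $A\in\mathbb{R}^{M\times N}$ of full column rank with rows $a_1,\dots,a_M$; singular values $\sigma_1\ge\dots\ge\sigma_N>0$, $\sigma_{\max}=\sigma_1$, $\sigma_{\min}=\sigma_N$, $c(A)=\sigma_{\max}^2/\sigma_{\min}^2$, $\tilde L=\max_i\|a_i\|^2$. Fix $\ell$. For $\alpha>0$: $A(\alpha)=1-2\alpha\sigma_\ell^2$, $B(\alpha)=\alpha^2M\tilde Lc(A)\sigma_{\max}^2$, $p(\alpha)=1-\alpha\sigma_{\min}^2$. For fixed $n$ and $0\le k\le n$: $B_k=\sum_{j=k}^n\Big(\prod_{i=j+1}^nA(\alpha_i)\Big)B(\alpha_j)\Big(\prod_{i=k}^{j-1}p(\alpha_i)\Big)$ (empty products $1$). Step-size scalars $a,b$ are unrelated to the rows $a_i$. *)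

theory Defs
  imports "HOL-Analysis.Analysis"
begin

text \<open>sigma is the (1-indexed, non-increasing) list of singular values of the M x N matrix A
  (N = CARD('n) \<le> M = CARD('m)), witnessed by a thin SVD  A = U Sigma V^T with U having
  orthonormal columns and V orthogonal.\<close>
definition singular_values :: "real^'n^'m \<Rightarrow> (nat \<Rightarrow> real) \<Rightarrow> bool" where
  "singular_values A \<sigma> \<longleftrightarrow>
     (\<forall>i j. 1 \<le> i \<longrightarrow> i \<le> j \<longrightarrow> j \<le> CARD('n) \<longrightarrow> \<sigma> j \<le> \<sigma> i) \<and>
     (\<forall>i. 1 \<le> i \<longrightarrow> i \<le> CARD('n) \<longrightarrow> 0 \<le> \<sigma> i) \<and>
     (\<exists>(U::real^'n^'m) (V::real^'n^'n) (e::'n \<Rightarrow> nat).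
        transpose U ** U = mat 1 \<and> orthogonal_matrix V \<and>
        bij_betw e UNIV {1..CARD('n)} \<and>
        A = U ** (\<chi> i j. if i = j then \<sigma> (e i) else 0) ** transpose V)"

definition Ltilde :: "real^'n^'m \<Rightarrow> real" where
  "Ltilde A = Max {(norm (row i A))^2 | i. True}"

definition condA :: "real \<Rightarrow> real \<Rightarrow> real" where
  "condA smax smin = smax^2 / smin^2"

definition Afac :: "real \<Rightarrow> real \<Rightarrow> real" where
  "Afac sl \<alpha> = 1 - 2 * \<alpha> * sl^2"

definition Bfac :: "real \<Rightarrow> real \<Rightarrow> real \<Rightarrow> real \<Rightarrow> real \<Rightarrow> real" where
  "Bfac M Lt smax smin \<alpha> = \<alpha>^2 * M * Lt * condA smax smin * smax^2"

definition pfac :: "real \<Rightarrow> real \<Rightarrow> real" where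
  "pfac smin \<alpha> = 1 - \<alpha> * smin^2"

definition Bk :: "real \<Rightarrow> real \<Rightarrow> real \<Rightarrow> real \<Rightarrow> real \<Rightarrow> (nat \<Rightarrow> real) \<Rightarrow> nat \<Rightarrow> nat \<Rightarrow> real" where
  "Bk sl M Lt smax smin \<alpha> n k =
     (\<Sum>j\<in>{k..n}. (\<Prod>i\<in>{j+1..n}. Afac sl (\<alpha> i)) * Bfac M Lt smax smin (\<alpha> j)
                   * (\<Prod>i\<in>{k..<j}. pfac smin (\<alpha> i)))"

end

theory Submission
  imports Defs
begin


lemma sv_bound:
  fixes A :: "real^'n^'m" and \<sigma> :: "nat \<Rightarrow> real"
  assumes sv: "singular_values A \<sigma>" and l: "1 \<le> l" "l \<le> CARD('n)"
  shows "(\<sigma> l)^2 \<le> real CARD('m) * Ltilde A"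
proof -
  obtain U :: "real^'n^'m" and V :: "real^'n^'n" and e :: "'n \<Rightarrow> nat" where
    tU: "transpose U ** U = mat 1" and oV: "orthogonal_matrix V" and bij: "bij_betw e UNIV {1..CARD('n)}"
    and Aeq: "A = U ** (\<chi> i j. if i = j then \<sigma> (e i) else 0) ** transpose V"
    using sv unfolding singular_values_def by blast
  obtain c where ec: "e c = l" using bij l unfolding bij_betw_def by (metis atLeastAtMost_iff imageE)
  define D :: "real^'n^'n" where "D = (\<chi> i j. if i = j then \<sigma> (e i) else 0)"
  define v where "v = column c V"
  have tV: "transpose V ** V = mat 1" using oV orthogonal_matrix by blast
  have nv: "norm v = 1" using oV unfolding v_def orthogonal_matrix_orthonormal_columns by blast
  have "transpose V *v v = axis c 1"
    unfolding v_def matrix_vector_mult_basis[symmetric] matrix_vector_mul_assoc tV by simp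
  moreover have "D *v axis c 1 = \<sigma> l *s axis c 1"
  proof -
    have "(\<Sum>j\<in>UNIV. (if i = j then \<sigma> (e i) else 0) * (if j = c then 1 else 0))
        = (\<Sum>j\<in>UNIV. if j = c then (if i = c then \<sigma> (e i) else 0) else 0)" for i
      by (rule sum.cong) auto
    then show ?thesis
      by (simp add: D_def vec_eq_iff matrix_vector_mult_def axis_def ec)
  qed
  ultimately have Av: "A *v v = \<sigma> l *s column c U"
    unfolding Aeq D_def[symmetric] matrix_vector_mul_assoc[symmetric]
    by (simp add: matrix_vector_mult_basis[symmetric] vector_scalar_commute)
  have cU: "column c U \<bullet> column c U = 1"
    using arg_cong[OF tU, of "\<lambda>M. M $ c $ c"] by (simp add: matrix_mult_transpose_dot_column mat_def)
  have "(\<sigma> l)^2 = norm (A *v v)^2"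
    unfolding Av power2_norm_eq_inner by (simp add: cU power2_eq_square scalar_mult_eq_scaleR)
  also have "\<dots> = (\<Sum>i\<in>UNIV. ((A$i) \<bullet> v)^2)"
    unfolding power2_norm_eq_inner by (simp add: inner_vec_def matrix_vector_mul_component power2_eq_square)
  also have "\<dots> \<le> (\<Sum>i\<in>(UNIV::'m set). Ltilde A)"
  proof (rule sum_mono)
    fix i :: 'm
    have "\<bar>A$i \<bullet> v\<bar> \<le> norm (A$i)" using Cauchy_Schwarz_ineq2[of "A$i" v] nv by simp
    then have "(A$i \<bullet> v)^2 \<le> (norm (A$i))^2"
      by (metis abs_ge_zero power2_abs power_mono)
    also have rA: "norm (A$i) = norm (row i A)" by (simp add: row_def vec_eq_iff)
    also have "(norm (row i A))^2 \<le> Ltilde A"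
      unfolding Ltilde_def
    proof (rule Max_ge)
      have "{(norm (row i A))^2 | i. True} = (\<lambda>i. (norm (row i A))^2) ` (UNIV::'m set)" by auto
      then show "finite {(norm (row i A))^2 | i::'m. True}" by simp
    qed auto
    finally show "(A$i \<bullet> v)^2 \<le> Ltilde A" .
  qed
  finally show ?thesis by simp
qed



lemma L1:
  fixes t q :: real
  assumes t: "t > 0" and q: "0 < q" "q < 1"
  shows "(t+1) powr q - t powr q \<le> q * t powr (q-1)"
proof -
  have "\<And>x. t \<le> x \<Longrightarrow> x \<le> t+1 \<Longrightarrow> ((\<lambda>x. x powr q) has_real_derivative q * x powr (q-1)) (at x)"
    using t by (intro has_real_derivative_powr) auto
  from MVT2[of t "t+1", OF _ this] obtain z where z: "t < z" "z < t+1"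
    and eq: "(t+1) powr q - t powr q = (t + 1 - t) * (q * z powr (q-1))" by auto
  have "z powr (q-1) \<le> t powr (q-1)" using z t q by (intro powr_mono2') auto
  then show ?thesis using eq q by (simp add: mult_left_mono)
qed

lemma L2:
  fixes t r :: real
  assumes t: "t > 0" and r: "0 < r"
  shows "r * (t+1) powr (-r-1) \<le> t powr (-r) - (t+1) powr (-r)"
proof -
  have "\<And>x. t \<le> x \<Longrightarrow> x \<le> t+1 \<Longrightarrow> ((\<lambda>x. x powr (-r)) has_real_derivative (-r) * x powr (-r-1)) (at x)"
    using t has_real_derivative_powr[of _ "-r"] by auto
  from MVT2[of t "t+1", OF _ this] obtain z where z: "t < z" "z < t+1"
    and eq: "(t+1) powr (-r) - t powr (-r) = (t + 1 - t) * ((-r) * z powr (-r-1))" by auto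
  have "(t+1) powr (-r-1) \<le> z powr (-r-1)" using z t r by (intro powr_mono2') auto
  then have "r * (t+1) powr (-r-1) \<le> r * z powr (-r-1)" using r by (simp add: mult_left_mono)
  moreover have "(t + 1 - t) * (- r * z powr (- r - 1)) = - (r * z powr (-r-1))" by simp
  ultimately show ?thesis using eq by linarith
qed

theorem lemma21:
  fixes A :: "real^'n^'m" and \<sigma> :: "nat \<Rightarrow> real" and l :: nat
    and a b \<gamma> :: real and n k :: nat
  assumes "CARD('n) \<le> CARD('m)"
    and "rank A = CARD('n)"
    and "singular_values A \<sigma>"
    and "1 \<le> l" and "l \<le> CARD('n)"
    and "1/2 < \<gamma>" and "\<gamma> < 1" and "a > 0" and "b > 1"
    and "a / b powr \<gamma> \<le> 1 / (2 * real CARD('m) * Ltilde A)"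
    and "k \<le> n"
  shows "Bk (\<sigma> l) (real CARD('m)) (Ltilde A) (\<sigma> 1) (\<sigma> CARD('n))
            (\<lambda>j. a / (b + real j) powr \<gamma>) n k
         \<le> a^2 * real CARD('m) * Ltilde A * condA (\<sigma> 1) (\<sigma> CARD('n)) * (\<sigma> 1)^2 / (2*\<gamma> - 1)
            * (b + real k - 1) powr (1 - 2*\<gamma>)
            * exp (a * (\<sigma> CARD('n))^2 / (1 - \<gamma>) * (b + real k + 1) powr (1 - \<gamma>))
            * exp (- (a * (\<sigma> CARD('n))^2 / (1 - \<gamma>) * (b + real n + 1) powr (1 - \<gamma>)))"
proof -
  note sv = assms(3) and l = assms(4,5) and g1 = assms(6) and g2 = assms(7)
    and apos = assms(8) and b1 = assms(9) and astep = assms(10) and kn = assms(11)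
  define M where "M = real CARD('m)"
  define L where "L = Ltilde A"
  define S where "S = \<sigma> 1"
  define s where "s = \<sigma> CARD('n)"
  define sl where "sl = \<sigma> l"
  define \<alpha> where "\<alpha> = (\<lambda>j::nat. a / (b + real j) powr \<gamma>)"
  define q where "q = 1 - \<gamma>"
  define F where "F = (\<lambda>i::nat. a / q * (b + real i) powr q)"
  define G where "G = (\<lambda>y::real. (b + y) powr (1 - 2*\<gamma>))"
  define C where "C = M * L * condA S s * S^2"
  define E where "E = exp (- (s^2 * (F (Suc n) - F (Suc k))))"
  have q: "0 < q" "q < 1" using g1 g2 by (auto simp: q_def)
  have slML: "sl^2 \<le> M * L" unfolding sl_def M_def L_def using sv_bound[OF sv l] .
  have ssl: "0 \<le> s" "s \<le> sl"
    using sv l unfolding singular_values_def s_def sl_def by auto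
  have ab0: "0 < a / b powr \<gamma>" using apos b1 by simp
  have hML: "0 < M * L"
  proof (rule ccontr)
    assume "\<not> 0 < M * L"
    then have "2 * M * L \<le> 0" by (simp add: mult.assoc not_less mult.commute)
    then have "1 / (2 * M * L) \<le> 0" by (simp add: divide_nonneg_nonpos)
    then show False using ab0 astep unfolding M_def L_def by linarith
  qed
  have M0: "0 < M" unfolding M_def by simp
  have L0: "0 < L" using hML M0 by (simp add: zero_less_mult_iff)
  have C0: "0 \<le> C" unfolding C_def condA_def using M0 L0 by simp
  have \<alpha>pos: "0 < \<alpha> i" for i using apos b1 by (simp add: \<alpha>_def)
  have \<alpha>le: "\<alpha> i * (2 * (M * L)) \<le> 1" for i
  proof -
    have "b powr \<gamma> \<le> (b + real i) powr \<gamma>" using b1 g1 by (intro powr_mono2) auto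
    then have "\<alpha> i \<le> a / b powr \<gamma>" unfolding \<alpha>_def using apos b1
      by (intro divide_left_mono) auto
    also have "\<dots> \<le> 1 / (2 * (M * L))" using astep by (simp add: M_def L_def mult.assoc)
    finally show ?thesis using hML by (simp add: field_simps)
  qed
  have s2: "s^2 \<le> sl^2" using ssl by (intro power_mono) auto
  have asl: "\<alpha> i * sl^2 \<le> 1/2" for i
  proof -
    have "\<alpha> i * sl^2 \<le> \<alpha> i * (M * L)" using slML \<alpha>pos[of i] by (intro mult_left_mono) auto
    then show ?thesis using \<alpha>le[of i] by linarith
  qed
  have has: "\<alpha> i * s^2 \<le> \<alpha> i * sl^2" for i using s2 \<alpha>pos[of i] by (intro mult_left_mono) auto
  have expb: "1 - \<alpha> i * s^2 \<le> exp (- (s^2 * \<alpha> i))" for i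
    using exp_ge_add_one_self[of "- (s^2 * \<alpha> i)"] by (simp add: mult.commute)
  have Ab: "0 \<le> Afac sl (\<alpha> i) \<and> Afac sl (\<alpha> i) \<le> exp (- (s^2 * \<alpha> i))" for i
  proof -
    have "Afac sl (\<alpha> i) = 1 - 2 * (\<alpha> i * sl^2)" by (simp add: Afac_def)
    moreover have "0 \<le> \<alpha> i * s^2" using \<alpha>pos[of i] by simp
    ultimately show ?thesis using asl[of i] has[of i] expb[of i] by linarith
  qed
  have pb: "0 \<le> pfac s (\<alpha> i) \<and> pfac s (\<alpha> i) \<le> exp (- (s^2 * \<alpha> i))" for i
  proof -
    have "pfac s (\<alpha> i) = 1 - \<alpha> i * s^2" by (simp add: pfac_def)
    then show ?thesis using asl[of i] has[of i] expb[of i] by linarith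
  qed
  have aform: "\<alpha> i = a * (b + real i) powr (-\<gamma>)" for i
    unfolding \<alpha>_def using b1 by (simp add: powr_minus_divide)
  have ge1: "F (Suc i) - F i \<le> \<alpha> i" for i
  proof -
    have "(b + real i + 1) powr q - (b + real i) powr q \<le> q * (b + real i) powr (q - 1)"
      using L1[of "b + real i" q] b1 q by simp
    then have "a / q * ((b + real i + 1) powr q - (b + real i) powr q) \<le> a / q * (q * (b + real i) powr (q - 1))"
      using apos q by (intro mult_left_mono) auto
    moreover have "F (Suc i) = a / q * (b + real i + 1) powr q" "F i = a / q * (b + real i) powr q"
      by (simp_all add: F_def add_ac)
    moreover have "a / q * (q * (b + real i) powr (q - 1)) = \<alpha> i" using q
      unfolding aform q_def by simp
    ultimately show ?thesis by (simp add: right_diff_distrib)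
  qed
  have ge2: "F (Suc (Suc i)) - F (Suc i) \<le> \<alpha> i" for i
  proof -
    have "(b + real i + 1 + 1) powr q - (b + real i + 1) powr q \<le> q * (b + real i + 1) powr (q - 1)"
      using L1[of "b + real i + 1" q] b1 q by simp
    also have "\<dots> \<le> q * (b + real i) powr (q - 1)"
      using q b1 by (intro mult_left_mono powr_mono2') auto
    finally have "a / q * ((b + real i + 1 + 1) powr q - (b + real i + 1) powr q) \<le> a / q * (q * (b + real i) powr (q - 1))"
      using apos q by (intro mult_left_mono) auto
    moreover have "F (Suc (Suc i)) = a / q * (b + real i + 1 + 1) powr q" "F (Suc i) = a / q * (b + real i + 1) powr q"
      by (simp_all add: F_def add_ac)
    moreover have "a / q * (q * (b + real i) powr (q - 1)) = \<alpha> i" using q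
      unfolding aform q_def by simp
    ultimately show ?thesis by (simp add: right_diff_distrib)
  qed
  have sq: "(\<alpha> j)^2 \<le> a^2 / (2*\<gamma> - 1) * (G (real j - 1) - G (real j))" for j
  proof -
    have r: "0 < 2*\<gamma> - 1" using g1 by simp
    have "(2*\<gamma> - 1) * (b + real j - 1 + 1) powr (-(2*\<gamma> - 1) - 1)
        \<le> (b + real j - 1) powr (-(2*\<gamma> - 1)) - (b + real j - 1 + 1) powr (-(2*\<gamma> - 1))"
      using L2[of "b + real j - 1" "2*\<gamma> - 1"] b1 r by simp
    then have "(2*\<gamma> - 1) * (b + real j) powr (-(2*\<gamma>))
        \<le> G (real j - 1) - G (real j)" unfolding G_def by (simp add: algebra_simps)
    then have X: "(b + real j) powr (-(2*\<gamma>)) \<le> (G (real j - 1) - G (real j)) / (2*\<gamma> - 1)"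
      using r by (simp add: field_simps)
    have "(\<alpha> j)^2 = a^2 * (b + real j) powr (-(2*\<gamma>))"
      unfolding aform power_mult_distrib using b1
      by (simp add: power2_eq_square powr_add[symmetric])
    also have "\<dots> \<le> a^2 * ((G (real j - 1) - G (real j)) / (2*\<gamma> - 1))"
      by (rule mult_left_mono[OF X]) simp
    finally show ?thesis by simp
  qed
  have sumsq: "(\<Sum>j\<in>{k..n}. (\<alpha> j)^2) \<le> a^2 / (2*\<gamma> - 1) * G (real k - 1)"
  proof -
    define H where "H = (\<lambda>j::nat. - G (real j - 1))"
    have "(\<Sum>j\<in>{k..n}. (\<alpha> j)^2) \<le> (\<Sum>j\<in>{k..n}. a^2 / (2*\<gamma> - 1) * (H (Suc j) - H j))"
      by (rule sum_mono) (use sq in \<open>simp add: H_def\<close>)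
    also have "\<dots> = a^2 / (2*\<gamma> - 1) * (H (Suc n) - H k)"
      using sum_Suc_diff[of k n H] kn by (subst sum_distrib_left[symmetric]) simp
    also have "\<dots> \<le> a^2 / (2*\<gamma> - 1) * G (real k - 1)"
      using g1 b1 by (intro mult_left_mono) (auto simp: H_def G_def)
    finally show ?thesis .
  qed
  have PA: "(\<Prod>i\<in>{j+1..n}. Afac sl (\<alpha> i)) \<le> exp (- (s^2 * (F (Suc n) - F (Suc j))))"
    if "j \<le> n" for j
  proof -
    have "(\<Prod>i\<in>{j+1..n}. Afac sl (\<alpha> i)) \<le> (\<Prod>i\<in>{j+1..n}. exp (- (s^2 * \<alpha> i)))"
      using Ab by (intro prod_mono) auto
    also have "\<dots> = exp (- (s^2 * (\<Sum>i\<in>{j+1..n}. \<alpha> i)))"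
      by (simp add: exp_sum[symmetric] sum_distrib_left sum_negf)
    also have "\<dots> \<le> exp (- (s^2 * (F (Suc n) - F (Suc j))))"
    proof -
      have "F (Suc n) - F (Suc j) = (\<Sum>i\<in>{Suc j..n}. F (Suc i) - F i)"
        using that by (simp add: sum_Suc_diff)
      also have "\<dots> \<le> (\<Sum>i\<in>{j+1..n}. \<alpha> i)" using ge1 by (simp add: sum_mono)
      finally have "s^2 * (F (Suc n) - F (Suc j)) \<le> s^2 * (\<Sum>i\<in>{j+1..n}. \<alpha> i)"
        by (rule mult_left_mono) simp
      then show ?thesis by simp
    qed
    finally show ?thesis .
  qed
  have Pp: "(\<Prod>i\<in>{k..<j}. pfac s (\<alpha> i)) \<le> exp (- (s^2 * (F (Suc j) - F (Suc k))))"
    if "k \<le> j" for j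
  proof -
    have "(\<Prod>i\<in>{k..<j}. pfac s (\<alpha> i)) \<le> (\<Prod>i\<in>{k..<j}. exp (- (s^2 * \<alpha> i)))"
      using pb by (intro prod_mono) auto
    also have "\<dots> = exp (- (s^2 * (\<Sum>i\<in>{k..<j}. \<alpha> i)))"
      by (simp add: exp_sum[symmetric] sum_distrib_left sum_negf)
    also have "\<dots> \<le> exp (- (s^2 * (F (Suc j) - F (Suc k))))"
    proof -
      have "F (Suc j) - F (Suc k) = (\<Sum>i\<in>{k..<j}. F (Suc (Suc i)) - F (Suc i))"
        using sum_Suc_diff'[OF that, of "\<lambda>i. F (Suc i)"] by simp
      also have "\<dots> \<le> (\<Sum>i\<in>{k..<j}. \<alpha> i)" using ge2 by (simp add: sum_mono)
      finally have "s^2 * (F (Suc j) - F (Suc k)) \<le> s^2 * (\<Sum>i\<in>{k..<j}. \<alpha> i)"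
        by (rule mult_left_mono) simp
      then show ?thesis by simp
    qed
    finally show ?thesis .
  qed
  have hterm: "(\<Prod>i\<in>{j+1..n}. Afac sl (\<alpha> i)) * Bfac M L S s (\<alpha> j) * (\<Prod>i\<in>{k..<j}. pfac s (\<alpha> i))
      \<le> (\<alpha> j)^2 * C * E" if "j \<in> {k..n}" for j
  proof -
    have B: "Bfac M L S s (\<alpha> j) = (\<alpha> j)^2 * C" by (simp add: Bfac_def C_def mult.assoc)
    have n1: "0 \<le> (\<Prod>i\<in>{j+1..n}. Afac sl (\<alpha> i))" using Ab by (intro prod_nonneg) auto
    have n2: "0 \<le> (\<Prod>i\<in>{k..<j}. pfac s (\<alpha> i))" using pb by (intro prod_nonneg) auto
    have n3: "0 \<le> (\<alpha> j)^2 * C" using C0 by simp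
    have "(\<Prod>i\<in>{j+1..n}. Afac sl (\<alpha> i)) * ((\<alpha> j)^2 * C) * (\<Prod>i\<in>{k..<j}. pfac s (\<alpha> i))
        \<le> exp (- (s^2 * (F (Suc n) - F (Suc j)))) * ((\<alpha> j)^2 * C) * exp (- (s^2 * (F (Suc j) - F (Suc k))))"
      using PA[of j] Pp[of j] that n1 n2 n3 C0
      by (intro mult_mono) (auto intro: mult_nonneg_nonneg)
    also have "\<dots> = (\<alpha> j)^2 * C * E"
      unfolding E_def by (simp add: mult_ac exp_add[symmetric] algebra_simps)
    finally show ?thesis using B by simp
  qed
  have "Bk sl M L S s \<alpha> n k \<le> (\<Sum>j\<in>{k..n}. (\<alpha> j)^2 * C * E)"
    unfolding Bk_def by (rule sum_mono) (rule hterm)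
  also have "\<dots> = C * E * (\<Sum>j\<in>{k..n}. (\<alpha> j)^2)"
    by (simp add: sum_distrib_left mult_ac)
  also have "\<dots> \<le> C * E * (a^2 / (2*\<gamma> - 1) * G (real k - 1))"
    using C0 sumsq unfolding E_def by (intro mult_left_mono) auto
  also have "\<dots> = a^2 * M * L * condA S s * S^2 / (2*\<gamma> - 1)
            * (b + real k - 1) powr (1 - 2*\<gamma>)
            * exp (a * s^2 / (1 - \<gamma>) * (b + real k + 1) powr (1 - \<gamma>))
            * exp (- (a * s^2 / (1 - \<gamma>) * (b + real n + 1) powr (1 - \<gamma>)))"
  proof -
    have "E = exp (a * s^2 / (1 - \<gamma>) * (b + real k + 1) powr (1 - \<gamma>))
            * exp (- (a * s^2 / (1 - \<gamma>) * (b + real n + 1) powr (1 - \<gamma>)))"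
      unfolding E_def F_def q_def exp_add[symmetric]
      by (simp add: algebra_simps)
    moreover have "G (real k - 1) = (b + real k - 1) powr (1 - 2*\<gamma>)"
      unfolding G_def by (simp add: algebra_simps)
    ultimately show ?thesis unfolding C_def by (simp add: mult_ac)
  qed
  finally show ?thesis
    unfolding M_def L_def S_def s_def sl_def \<alpha>_def .
qed

end
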